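(* Let $p\ge3$ be a prime, let $d\ge2$, let $D$ be a probability distribution on $\mathbb{F}_p$, let $P:\mathbb{F}_p^n\to\mathbb{F}_p$ be a polynomial of degree at most $d$, and let $\{X_1,\dots,X_d\}$ be a partition of $[n]$. Then \[|\mathbb{E}_{x\sim D^n}\omega_p^{P(x)}|^{2^d}\le\mathbb{E}_{x\sim(D-D)^n}\omega_p^{P_{\{X_1,\dots,X_d\}}(x)}.\]
   Context: $\omega_p=\exp(2\pi i/p)$. $D^n$ denotes the product distribution with independent coordinates distributed according to $D$; $D-D$ is the distribution of $u-v$ for independent $u,v\sim D$. Writing $P$ as a linear combination of monomials $a\prod_{u=1}^n x_u^{s_u}$ with $a\ne0$, $P_{\{X_1,\dots,X_d\}}$ is the polynomial obtained by keeping only those monomials such that for each $i\in[d]$ there is $u\in X_i$ with $s_u\ge1$. *)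

theory Defs
  imports Complex_Main "HOL-Computational_Algebra.Primes" "HOL-Library.FuncSet" "HOL-Library.Complex_Order"
begin

text \<open>F_p is represented by the integers {0..<p}; arithmetic is mod p.
  A polynomial over F_p in variables x_0..x_{n-1} is given by a finite set M of
  exponent vectors s :: nat => nat (s u = 0 for u >= n) and coefficients c s :: int
  (read mod p). The monomial a * prod x_u^(s u) is present iff c s mod p \<noteq> 0.\<close>

definition omega :: "nat \<Rightarrow> int \<Rightarrow> complex" where
  "omega p k = cis (2 * pi * of_int k / of_nat p)"

definition Fp_vecs :: "nat \<Rightarrow> nat \<Rightarrow> (nat \<Rightarrow> int) set" where
  "Fp_vecs p n = PiE {..<n} (\<lambda>_. {0..<int p})"

definition poly_eval :: "nat \<Rightarrow> (nat \<Rightarrow> nat) set \<Rightarrow> ((nat \<Rightarrow> nat) \<Rightarrow> int)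
    \<Rightarrow> (nat \<Rightarrow> int) \<Rightarrow> int" where
  "poly_eval n M c x = (\<Sum>s\<in>M. c s * (\<Prod>u<n. x u ^ s u))"

definition is_poly_deg_le :: "nat \<Rightarrow> nat \<Rightarrow> (nat \<Rightarrow> nat) set \<Rightarrow> ((nat \<Rightarrow> nat) \<Rightarrow> int)
    \<Rightarrow> nat \<Rightarrow> bool" where
  "is_poly_deg_le p n M c d \<longleftrightarrow> finite M \<and> (\<forall>s\<in>M. \<forall>u\<ge>n. s u = 0)
     \<and> (\<forall>s\<in>M. c s mod int p \<noteq> 0 \<longrightarrow> (\<Sum>u<n. s u) \<le> d)"

text \<open>P_{X_1..X_d}: keep monomials with nonzero coefficient meeting every part.\<close>
definition restrict_mons :: "nat \<Rightarrow> (nat \<Rightarrow> nat) set \<Rightarrow> ((nat \<Rightarrow> nat) \<Rightarrow> int)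
    \<Rightarrow> nat \<Rightarrow> (nat \<Rightarrow> nat set) \<Rightarrow> (nat \<Rightarrow> nat) set" where
  "restrict_mons p M c d X =
     {s\<in>M. c s mod int p \<noteq> 0 \<and> (\<forall>i<d. \<exists>u\<in>X i. s u \<ge> 1)}"

definition is_partition :: "nat \<Rightarrow> nat \<Rightarrow> (nat \<Rightarrow> nat set) \<Rightarrow> bool" where
  "is_partition n d X \<longleftrightarrow> (\<forall>i<d. X i \<noteq> {}) \<and>
     (\<forall>i<d. \<forall>j<d. i \<noteq> j \<longrightarrow> X i \<inter> X j = {}) \<and> (\<Union>i<d. X i) = {..<n}"

definition is_distr :: "nat \<Rightarrow> (int \<Rightarrow> real) \<Rightarrow> bool" where
  "is_distr p D \<longleftrightarrow> (\<forall>a\<in>{0..<int p}. D a \<ge> 0) \<and> (\<Sum>a\<in>{0..<int p}. D a) = 1"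

definition diff_distr :: "nat \<Rightarrow> (int \<Rightarrow> real) \<Rightarrow> int \<Rightarrow> real" where
  "diff_distr p D z = (\<Sum>a\<in>{0..<int p}. \<Sum>b\<in>{0..<int p}.
       if (a - b) mod int p = z then D a * D b else 0)"

definition expect_prod :: "nat \<Rightarrow> nat \<Rightarrow> (int \<Rightarrow> real) \<Rightarrow> ((nat \<Rightarrow> int) \<Rightarrow> complex) \<Rightarrow> complex" where
  "expect_prod p n D f = (\<Sum>x\<in>Fp_vecs p n. of_real (\<Prod>u<n. D (x u)) * f x)"

end

theory Submission
  imports Defs
begin

definition wt :: "(int \<Rightarrow> real) \<Rightarrow> nat \<Rightarrow> (nat \<Rightarrow> int) \<Rightarrow> real" where
  "wt D n x = (\<Prod>u<n. D (x u))"

definition mix :: "nat set \<Rightarrow> (nat \<Rightarrow> int) \<Rightarrow> (nat \<Rightarrow> int) \<Rightarrow> (nat \<Rightarrow> int)" where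
  "mix S x y = (\<lambda>u. if u \<in> S then y u else x u)"

lemma finite_V: "finite (Fp_vecs p n)"
  unfolding Fp_vecs_def by (intro finite_PiE) auto

lemma mix_in: "x \<in> Fp_vecs p n \<Longrightarrow> y \<in> Fp_vecs p n \<Longrightarrow> mix S x y \<in> Fp_vecs p n"
  unfolding Fp_vecs_def mix_def PiE_def Pi_def extensional_def by auto

lemma mix_mix: "mix S (mix S x y) (mix S y x) = x"
  unfolding mix_def by auto

lemma wt_mix: "wt D n (mix S x y) * wt D n (mix S y x) = wt D n x * wt D n y"
  unfolding wt_def prod.distrib[symmetric] by (intro prod.cong) (auto simp: mix_def)

lemma wt_mix_c: "complex_of_real (wt D n (mix S x y)) * complex_of_real (wt D n (mix S y x)) = complex_of_real (wt D n x) * complex_of_real (wt D n y)"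
  by (metis wt_mix of_real_mult)

lemma wt_nonneg: "is_distr p D \<Longrightarrow> x \<in> Fp_vecs p n \<Longrightarrow> wt D n x \<ge> 0"
  unfolding wt_def is_distr_def Fp_vecs_def by (intro prod_nonneg) (auto simp: PiE_iff)

lemma sum_wt: "is_distr p D \<Longrightarrow> (\<Sum>x\<in>Fp_vecs p n. wt D n x) = 1"
proof -
  assume "is_distr p D"
  have "(\<Sum>x\<in>Fp_vecs p n. wt D n x) = (\<Prod>u<n. \<Sum>a\<in>{0..<int p}. D a)"
    unfolding wt_def Fp_vecs_def by (subst prod_sum_PiE) auto
  also have "\<dots> = 1" using \<open>is_distr p D\<close> by (simp add: is_distr_def)
  finally show ?thesis .
qed

lemma resample:
  assumes "is_distr p D"
  shows "(\<Sum>x\<in>Fp_vecs p n. \<Sum>y\<in>Fp_vecs p n. complex_of_real (wt D n x * wt D n y) * g (mix S x y))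
       = (\<Sum>x\<in>Fp_vecs p n. complex_of_real (wt D n x) * g x)"
proof -
  let ?V = "Fp_vecs p n"
  let ?s = "\<lambda>(x,y). (mix S x y, mix S y x)"
  let ?h = "\<lambda>(a,b). complex_of_real (wt D n a * wt D n b) * g a"
  have bij: "bij_betw ?s (?V \<times> ?V) (?V \<times> ?V)"
    by (rule bij_betwI[where g="?s"]) (auto simp: mix_in mix_mix)
  have "(\<Sum>x\<in>?V. \<Sum>y\<in>?V. complex_of_real (wt D n x * wt D n y) * g (mix S x y))
      = (\<Sum>z\<in>?V \<times> ?V. ?h (?s z))"
    by (subst sum.cartesian_product) (auto simp: wt_mix_c mult_ac intro!: sum.cong)
  also have "\<dots> = (\<Sum>z\<in>?V \<times> ?V. ?h z)"
    using sum.reindex_bij_betw[OF bij, of ?h] by simp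
  also have "\<dots> = (\<Sum>x\<in>?V. \<Sum>y\<in>?V. complex_of_real (wt D n x) * g x * complex_of_real (wt D n y))"
    by (subst sum.cartesian_product[symmetric]) (auto simp: mult_ac intro!: sum.cong)
  also have "\<dots> = (\<Sum>x\<in>?V. complex_of_real (wt D n x) * g x * complex_of_real (\<Sum>y\<in>?V. wt D n y))"
    by (simp add: sum_distrib_left)
  also have "\<dots> = (\<Sum>x\<in>?V. complex_of_real (wt D n x) * g x)"
    using sum_wt[OF assms] by simp
  finally show ?thesis .
qed

lemma cs_ineq:
  fixes h :: "'a \<Rightarrow> complex"
  assumes "finite A" "\<And>a. a \<in> A \<Longrightarrow> w a \<ge> 0" "(\<Sum>a\<in>A. w a) = 1"
  shows "(cmod (\<Sum>a\<in>A. complex_of_real (w a) * h a))^2 \<le> (\<Sum>a\<in>A. w a * (cmod (h a))^2)"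
proof -
  let ?m = "\<Sum>a\<in>A. w a * cmod (h a)"
  have 1: "cmod (\<Sum>a\<in>A. complex_of_real (w a) * h a) \<le> ?m"
    by (rule order.trans[OF norm_sum]) (simp add: norm_mult assms(2))
  have 0: "0 \<le> cmod (\<Sum>a\<in>A. complex_of_real (w a) * h a)" by simp
  have "0 \<le> (\<Sum>a\<in>A. w a * (cmod (h a) - ?m)^2)"
    by (intro sum_nonneg mult_nonneg_nonneg) (auto simp: assms(2))
  also have "\<dots> = (\<Sum>a\<in>A. w a * (cmod (h a))^2) - 2 * ?m * ?m + ?m^2 * (\<Sum>a\<in>A. w a)"
    by (simp add: power2_diff algebra_simps sum.distrib sum_subtractf sum_distrib_left sum_distrib_right)
  finally have "?m^2 \<le> (\<Sum>a\<in>A. w a * (cmod (h a))^2)" using assms(3) by (simp add: power2_eq_square)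
  moreover have "(cmod (\<Sum>a\<in>A. complex_of_real (w a) * h a))^2 \<le> ?m^2"
    using 1 0 by (rule power_mono)
  ultimately show ?thesis by linarith
qed

lemma resample':
  assumes "is_distr p D"
  shows "(\<Sum>x\<in>Fp_vecs p n. complex_of_real (wt D n x) * (\<Sum>y\<in>Fp_vecs p n. complex_of_real (wt D n y) * g (mix S x y)))
       = (\<Sum>x\<in>Fp_vecs p n. complex_of_real (wt D n x) * g x)"
proof -
  have "(\<Sum>x\<in>Fp_vecs p n. complex_of_real (wt D n x) * (\<Sum>y\<in>Fp_vecs p n. complex_of_real (wt D n y) * g (mix S x y)))
     = (\<Sum>x\<in>Fp_vecs p n. \<Sum>y\<in>Fp_vecs p n. complex_of_real (wt D n x * wt D n y) * g (mix S x y))"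
    by (simp add: sum_distrib_left mult.assoc)
  also have "\<dots> = (\<Sum>x\<in>Fp_vecs p n. complex_of_real (wt D n x) * g x)"
    by (rule resample[OF assms])
  finally show ?thesis .
qed

definition cj :: "nat \<Rightarrow> complex \<Rightarrow> complex" where
  "cj m z = (if even m then z else cnj z)"

definition XU :: "(nat \<Rightarrow> nat set) \<Rightarrow> nat set \<Rightarrow> nat set" where
  "XU X T = (\<Union>i\<in>T. X i)"

definition Fk :: "((nat \<Rightarrow> int) \<Rightarrow> complex) \<Rightarrow> (nat \<Rightarrow> nat set) \<Rightarrow> nat \<Rightarrow> (nat \<Rightarrow> int) \<Rightarrow> (nat \<Rightarrow> int) \<Rightarrow> complex" where
  "Fk f X k x x' = (\<Prod>T\<in>Pow {..<k}. cj (card T) (f (mix (XU X T) x x')))"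

lemma Fk_Suc: "Fk f X (Suc k) x x' = Fk f X k x x' * cnj (Fk f X k (mix (X k) x x') x')"
proof -
  have P: "Pow {..<Suc k} = Pow {..<k} \<union> insert k ` Pow {..<k}"
    by (simp add: lessThan_Suc Pow_insert)
  have inj: "inj_on (insert k) (Pow {..<k})"
    by (rule inj_onI) (metis Pow_iff insert_ident lessThan_iff less_irrefl subsetD)
  have disj: "Pow {..<k} \<inter> insert k ` Pow {..<k} = {}" by auto
  have "Fk f X (Suc k) x x' = Fk f X k x x' * (\<Prod>T\<in>insert k ` Pow {..<k}. cj (card T) (f (mix (XU X T) x x')))"
    unfolding Fk_def P by (subst prod.union_disjoint) (auto simp: disj)
  also have "(\<Prod>T\<in>insert k ` Pow {..<k}. cj (card T) (f (mix (XU X T) x x')))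
     = (\<Prod>T\<in>Pow {..<k}. cj (card (insert k T)) (f (mix (XU X (insert k T)) x x')))"
    by (subst prod.reindex[OF inj]) simp
  also have "\<dots> = (\<Prod>T\<in>Pow {..<k}. cnj (cj (card T) (f (mix (XU X T) (mix (X k) x x') x'))))"
  proof (intro prod.cong refl)
    fix T assume T: "T \<in> Pow {..<k}"
    then have "k \<notin> T" by auto
    moreover have "finite T" using T finite_subset by blast
    ultimately have "card (insert k T) = Suc (card T)" by simp
    moreover have "mix (XU X (insert k T)) x x' = mix (XU X T) (mix (X k) x x') x'"
      unfolding mix_def XU_def by auto
    ultimately show "cj (card (insert k T)) (f (mix (XU X (insert k T)) x x')) = cnj (cj (card T) (f (mix (XU X T) (mix (X k) x x') x')))"
      by (simp add: cj_def)
  qed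
  also have "\<dots> = cnj (Fk f X k (mix (X k) x x') x')"
    unfolding Fk_def by (simp add: cnj_prod)
  finally show ?thesis .
qed

lemma Fk_inv:
  assumes "\<And>i. i < k \<Longrightarrow> X i \<inter> S = {}"
  shows "Fk f X k x (mix S x' a) = Fk f X k x x'"
  unfolding Fk_def
proof (intro prod.cong refl)
  fix T assume "T \<in> Pow {..<k}"
  then have "mix (XU X T) x (mix S x' a) = mix (XU X T) x x'"
    using assms unfolding mix_def XU_def by (auto intro!: ext) (meson disjoint_iff lessThan_iff subsetD)+
  then show "cj (card T) (f (mix (XU X T) x (mix S x' a))) = cj (card T) (f (mix (XU X T) x x'))" by simp
qed

lemma swap2:
  fixes a :: "'a \<Rightarrow> 'c::comm_semiring_1"
  shows "(\<Sum>x\<in>A. a x * (\<Sum>y\<in>B. b y * H x y)) = (\<Sum>y\<in>B. b y * (\<Sum>x\<in>A. a x * H x y))"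
  by (simp add: sum_distrib_left mult_ac sum.swap[of _ A B])

definition Bk :: "nat \<Rightarrow> nat \<Rightarrow> (int \<Rightarrow> real) \<Rightarrow> ((nat \<Rightarrow> int) \<Rightarrow> complex) \<Rightarrow> (nat \<Rightarrow> nat set) \<Rightarrow> nat \<Rightarrow> complex" where
  "Bk p n D f X k = (\<Sum>x\<in>Fp_vecs p n. complex_of_real (wt D n x) *
       (\<Sum>x'\<in>Fp_vecs p n. complex_of_real (wt D n x') * Fk f X k x x'))"

lemma box_step:
  assumes distr: "is_distr p D" and disj: "\<And>i. i < k \<Longrightarrow> X i \<inter> X k = {}"
  shows "\<exists>R. Bk p n D f X (Suc k) = complex_of_real R \<and> (cmod (Bk p n D f X k))^2 \<le> R"
proof -
  define V where "V = Fp_vecs p n"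
  define W where "W x = complex_of_real (wt D n x)" for x
  define G where "G = Fk f X k"
  define S where "S = X k"
  define A where "A x x' = (\<Sum>y\<in>V. W y * G (mix S x y) x')" for x x'
  define K where "K a b = G a b * cnj (G (mix S a b) b)" for a b
  have inv: "G x (mix S x' a) = G x x'" for x x' a
    unfolding G_def S_def by (rule Fk_inv) (rule disj)
  have Bk_eq: "Bk p n D f X k = (\<Sum>x\<in>V. W x * (\<Sum>x'\<in>V. W x' * G x x'))"
    unfolding Bk_def V_def W_def G_def ..
  have "\<dots> = (\<Sum>x'\<in>V. W x' * (\<Sum>x\<in>V. W x * G x x'))" by (rule swap2)
  also have "\<dots> = (\<Sum>x'\<in>V. W x' * (\<Sum>x\<in>V. W x * (\<Sum>y\<in>V. W y * G (mix S x y) x')))"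
  proof -
    have "(\<Sum>x\<in>V. W x * G x x') = (\<Sum>x\<in>V. W x * (\<Sum>y\<in>V. W y * G (mix S x y) x'))" for x'
      unfolding V_def W_def using resample'[OF distr, of n "\<lambda>z. G z x'" S] by simp
    then show ?thesis by simp
  qed
  also have "\<dots> = (\<Sum>x\<in>V. W x * (\<Sum>x'\<in>V. W x' * A x x'))"
    unfolding A_def by (rule swap2[symmetric])
  also have "\<dots> = (\<Sum>z\<in>V \<times> V. complex_of_real (wt D n (fst z) * wt D n (snd z)) * A (fst z) (snd z))"
    unfolding W_def by (simp add: sum.cartesian_product split_def sum_distrib_left mult_ac)
  finally have B1: "Bk p n D f X k = \<dots>" using Bk_eq by simp
  define R where "R = (\<Sum>z\<in>V \<times> V. wt D n (fst z) * wt D n (snd z) * (cmod (A (fst z) (snd z)))^2)"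
  have finV: "finite V" unfolding V_def by (rule finite_V)
  have "(cmod (Bk p n D f X k))^2 \<le> R"
    unfolding B1 R_def
  proof (rule cs_ineq)
    show "finite (V \<times> V)" using finV by simp
    show "0 \<le> wt D n (fst z) * wt D n (snd z)" if "z \<in> V \<times> V" for z
      using that wt_nonneg[OF distr] unfolding V_def by (auto intro: mult_nonneg_nonneg)
    show "(\<Sum>z\<in>V \<times> V. wt D n (fst z) * wt D n (snd z)) = 1"
      using sum_wt[OF distr, of n] unfolding V_def
      by (simp add: sum.cartesian_product' sum_product[symmetric])
  qed
  moreover have "Bk p n D f X (Suc k) = complex_of_real R"
  proof -
    have AA: "A x x' * cnj (A x x') = (\<Sum>y\<in>V. W y * (\<Sum>y'\<in>V. W y' * K (mix S x y) (mix S x' y')))" for x x'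
    proof -
      have "A x x' * cnj (A x x') = (\<Sum>y\<in>V. W y * G (mix S x y) x') * (\<Sum>y'\<in>V. W y' * cnj (G (mix S x y') x'))"
        unfolding A_def W_def by (simp add: cnj_sum)
      also have "\<dots> = (\<Sum>y\<in>V. W y * (\<Sum>y'\<in>V. W y' * (G (mix S x y) x' * cnj (G (mix S x y') x'))))"
        by (simp add: sum_product sum_distrib_left mult_ac, subst sum.swap, simp add: mult_ac)
      also have "\<dots> = (\<Sum>y\<in>V. W y * (\<Sum>y'\<in>V. W y' * K (mix S x y) (mix S x' y')))"
      proof -
        have "K (mix S x y) (mix S x' y') = G (mix S x y) x' * cnj (G (mix S x y') x')" for y y'
        proof -
          have "mix S (mix S x y) (mix S x' y') = mix S x y'" unfolding mix_def by auto
          then show ?thesis unfolding K_def by (simp add: inv)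
        qed
        then show ?thesis by simp
      qed
      finally show ?thesis .
    qed
    have "complex_of_real R = (\<Sum>z\<in>V \<times> V. complex_of_real (wt D n (fst z) * wt D n (snd z)) * complex_of_real ((cmod (A (fst z) (snd z)))^2))"
      unfolding R_def by simp
    also have "\<dots> = (\<Sum>x\<in>V. W x * (\<Sum>x'\<in>V. W x' * (A x x' * cnj (A x x'))))"
      unfolding W_def complex_norm_square
      by (simp add: sum.cartesian_product' sum_distrib_left mult_ac)
    also have "\<dots> = (\<Sum>x\<in>V. W x * (\<Sum>x'\<in>V. W x' * (\<Sum>y\<in>V. W y * (\<Sum>y'\<in>V. W y' * K (mix S x y) (mix S x' y')))))"
      by (simp add: AA)
    also have "\<dots> = (\<Sum>x\<in>V. W x * (\<Sum>y\<in>V. W y * (\<Sum>x'\<in>V. W x' * (\<Sum>y'\<in>V. W y' * K (mix S x y) (mix S x' y')))))"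
    proof -
      have "(\<Sum>x'\<in>V. W x' * (\<Sum>y\<in>V. W y * (\<Sum>y'\<in>V. W y' * K (mix S x y) (mix S x' y'))))
         = (\<Sum>y\<in>V. W y * (\<Sum>x'\<in>V. W x' * (\<Sum>y'\<in>V. W y' * K (mix S x y) (mix S x' y'))))" for x
        by (rule swap2)
      then show ?thesis by simp
    qed
    also have "\<dots> = (\<Sum>x\<in>V. W x * (\<Sum>y\<in>V. W y * (\<Sum>x'\<in>V. W x' * K (mix S x y) x')))"
    proof -
      have "(\<Sum>x'\<in>V. W x' * (\<Sum>y'\<in>V. W y' * K (mix S x y) (mix S x' y'))) = (\<Sum>x'\<in>V. W x' * K (mix S x y) x')" for x y
        unfolding V_def W_def using resample'[OF distr, of n "K (mix S x y)" S] by simp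
      then show ?thesis by simp
    qed
    also have "\<dots> = (\<Sum>x\<in>V. W x * (\<Sum>x'\<in>V. W x' * K x x'))"
      unfolding V_def W_def using resample'[OF distr, of n "\<lambda>a. \<Sum>x'\<in>Fp_vecs p n. complex_of_real (wt D n x') * K a x'" S] by simp
    also have "\<dots> = Bk p n D f X (Suc k)"
      unfolding Bk_def K_def G_def S_def V_def W_def Fk_Suc ..
    finally show ?thesis by simp
  qed
  ultimately show ?thesis by blast
qed

definition sub :: "nat \<Rightarrow> nat \<Rightarrow> (nat \<Rightarrow> int) \<Rightarrow> (nat \<Rightarrow> int) \<Rightarrow> (nat \<Rightarrow> int)" where
  "sub p n x x' = restrict (\<lambda>u. (x u - x' u) mod int p) {..<n}"

lemma sub_in: "p > 0 \<Longrightarrow> sub p n x x' \<in> Fp_vecs p n"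
  unfolding sub_def Fp_vecs_def by auto

lemma prod_indicator:
  assumes "finite I"
  shows "(if \<forall>u\<in>I. P u then 1 else (0::real)) = (\<Prod>u\<in>I. if P u then 1 else 0)"
proof (cases "\<forall>u\<in>I. P u")
  case True then show ?thesis by simp
next
  case False
  then obtain u where "u \<in> I" "\<not> P u" by blast
  then show ?thesis using assms False by (subst prod_zero) auto
qed

lemma diff_count:
  assumes "y \<in> Fp_vecs p n"
  shows "(\<Sum>x\<in>Fp_vecs p n. \<Sum>x'\<in>Fp_vecs p n. wt D n x * wt D n x' * (if y = sub p n x x' then 1 else 0))
       = (\<Prod>u<n. diff_distr p D (y u))"
proof -
  let ?V = "Fp_vecs p n"
  let ?A = "{0..<int p}"
  define ind where "ind u a b = (if (a - b) mod int p = y u then 1 else (0::real))" for u a b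
  have eqv: "(y = sub p n x x') = (\<forall>u\<in>{..<n}. (x u - x' u) mod int p = y u)" for x x'
  proof
    assume "y = sub p n x x'" then show "\<forall>u\<in>{..<n}. (x u - x' u) mod int p = y u" by (auto simp: sub_def)
  next
    assume H: "\<forall>u\<in>{..<n}. (x u - x' u) mod int p = y u"
    show "y = sub p n x x'"
    proof
      fix u show "y u = sub p n x x' u"
        using H assms by (cases "u < n") (auto simp: sub_def Fp_vecs_def PiE_iff extensional_def)
    qed
  qed
  have "(\<Sum>x\<in>?V. \<Sum>x'\<in>?V. wt D n x * wt D n x' * (if y = sub p n x x' then 1 else 0))
     = (\<Sum>x\<in>?V. \<Sum>x'\<in>?V. \<Prod>u<n. D (x u) * (D (x' u) * ind u (x u) (x' u)))"
    unfolding eqv prod_indicator[OF finite_lessThan] wt_def ind_def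
    by (simp add: prod.distrib mult.assoc)
  also have "\<dots> = (\<Sum>x\<in>?V. \<Prod>u<n. \<Sum>b\<in>?A. D (x u) * (D b * ind u (x u) b))"
    unfolding Fp_vecs_def by (subst prod_sum_PiE) auto
  also have "\<dots> = (\<Prod>u<n. \<Sum>a\<in>?A. \<Sum>b\<in>?A. D a * (D b * ind u a b))"
    unfolding Fp_vecs_def by (subst prod_sum_PiE) auto
  also have "\<dots> = (\<Prod>u<n. diff_distr p D (y u))"
    unfolding diff_distr_def ind_def by (intro prod.cong refl sum.cong) auto
  finally show ?thesis .
qed

lemma pushforward:
  assumes "p > 0"
  shows "(\<Sum>x\<in>Fp_vecs p n. complex_of_real (wt D n x) * (\<Sum>x'\<in>Fp_vecs p n. complex_of_real (wt D n x') * g (sub p n x x')))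
     = expect_prod p n (diff_distr p D) g"
proof -
  let ?V = "Fp_vecs p n"
  have "(\<Sum>x\<in>?V. complex_of_real (wt D n x) * (\<Sum>x'\<in>?V. complex_of_real (wt D n x') * g (sub p n x x')))
     = (\<Sum>x\<in>?V. \<Sum>x'\<in>?V. \<Sum>y\<in>?V. complex_of_real (wt D n x * wt D n x' * (if y = sub p n x x' then 1 else 0)) * g y)"
  proof (intro sum.cong refl)
    fix x assume "x \<in> ?V"
    have *: "(\<Sum>y\<in>?V. complex_of_real (wt D n x * wt D n x' * (if y = sub p n x x' then 1 else 0)) * g y)
        = complex_of_real (wt D n x * wt D n x') * g (sub p n x x')" for x'
      using sub_in[OF assms, of n x x'] finite_V[of p n]
      by (simp add: if_distrib if_distribR sum.delta' cong: if_cong)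
    then show "complex_of_real (wt D n x) * (\<Sum>x'\<in>?V. complex_of_real (wt D n x') * g (sub p n x x')) =
         (\<Sum>x'\<in>?V. \<Sum>y\<in>?V. complex_of_real (wt D n x * wt D n x' * (if y = sub p n x x' then 1 else 0)) * g y)"
      unfolding * by (simp add: sum_distrib_left mult.assoc)
  qed
  also have "\<dots> = (\<Sum>x\<in>?V. \<Sum>y\<in>?V. \<Sum>x'\<in>?V. complex_of_real (wt D n x * wt D n x' * (if y = sub p n x x' then 1 else 0)) * g y)"
    by (rule sum.cong[OF refl], rule sum.swap)
  also have "\<dots> = (\<Sum>y\<in>?V. \<Sum>x\<in>?V. \<Sum>x'\<in>?V. complex_of_real (wt D n x * wt D n x' * (if y = sub p n x x' then 1 else 0)) * g y)"
    by (rule sum.swap)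
  also have "\<dots> = (\<Sum>y\<in>?V. complex_of_real (\<Sum>x\<in>?V. \<Sum>x'\<in>?V. wt D n x * wt D n x' * (if y = sub p n x x' then 1 else 0)) * g y)"
    by (simp only: of_real_sum sum_distrib_right)
  also have "\<dots> = expect_prod p n (diff_distr p D) g"
    unfolding expect_prod_def by (intro sum.cong refl) (simp add: diff_count)
  finally show ?thesis .
qed

lemma Bk_0:
  assumes "is_distr p D"
  shows "Bk p n D f X 0 = expect_prod p n D f"
proof -
  have F0: "Fk f X 0 x x' = f x" for x x'
    by (simp add: Fk_def cj_def XU_def mix_def)
  have "Bk p n D f X 0 = (\<Sum>x\<in>Fp_vecs p n. complex_of_real (wt D n x) * f x * complex_of_real (\<Sum>x'\<in>Fp_vecs p n. wt D n x'))"
    unfolding Bk_def F0 by (simp add: sum_distrib_left sum_distrib_right mult_ac)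
  also have "\<dots> = expect_prod p n D f"
  proof -
    have "(\<Sum>x'\<in>Fp_vecs p n. wt D n x') = 1" by (rule sum_wt[OF assms])
    then show ?thesis unfolding expect_prod_def wt_def by (simp only: of_real_1 mult_1_right)
  qed
  finally show ?thesis .
qed

lemma box:
  assumes distr: "is_distr p D"
    and disj: "\<And>i j. i < d \<Longrightarrow> j < d \<Longrightarrow> i \<noteq> j \<Longrightarrow> X i \<inter> X j = {}"
  shows "k \<le> d \<Longrightarrow> (cmod (expect_prod p n D f))^(2^k) \<le> cmod (Bk p n D f X k)
     \<and> (0 < k \<longrightarrow> Bk p n D f X k = complex_of_real (cmod (Bk p n D f X k)))"
proof (induction k)
  case 0
  then show ?case by (simp add: Bk_0[OF distr])
next
  case (Suc k)
  then have IH: "(cmod (expect_prod p n D f))^(2^k) \<le> cmod (Bk p n D f X k)" by simp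
  have "\<And>i. i < k \<Longrightarrow> X i \<inter> X k = {}" using disj Suc.prems by simp
  then obtain R where R: "Bk p n D f X (Suc k) = complex_of_real R" "(cmod (Bk p n D f X k))^2 \<le> R"
    using box_step[OF distr] by blast
  have R0: "R \<ge> 0" using R(2) by (meson order.trans zero_le_power2)
  have "(cmod (expect_prod p n D f))^(2^Suc k) = ((cmod (expect_prod p n D f))^(2^k))^2"
    by (simp add: power_mult[symmetric] mult.commute)
  also have "\<dots> \<le> (cmod (Bk p n D f X k))^2"
    using IH by (intro power_mono) auto
  also have "\<dots> \<le> R" by (rule R(2))
  finally show ?case using R R0 by simp
qed

lemma omega_add: "omega p (a + b) = omega p a * omega p b"
  unfolding omega_def cis_mult by (simp add: add_divide_distrib distrib_left)

lemma omega_0: "omega p 0 = 1"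
  unfolding omega_def by simp

lemma omega_sum: "(\<Prod>T\<in>A. omega p (g T)) = omega p (\<Sum>T\<in>A. g T)"
proof (cases "finite A")
  case True then show ?thesis
    by (induction A rule: finite_induct) (simp_all add: omega_0 omega_add)
next
  case False then show ?thesis by (simp add: omega_0)
qed

lemma omega_cnj: "cnj (omega p a) = omega p (- a)"
  unfolding omega_def cis_cnj by simp

lemma cj_omega: "cj m (omega p a) = omega p ((-1)^m * a)"
  unfolding cj_def by (simp add: omega_cnj)

lemma omega_mod:
  assumes "p > 0" "a mod int p = b mod int p"
  shows "omega p a = omega p b"
proof -
  obtain k where k: "a = b + int p * k"
    using assms(2) by (metis mod_eq_dvd_iff dvd_def diff_eq_eq add.commute)
  have "omega p (int p * k) = cis (2 * pi * of_int k)"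
    unfolding omega_def using assms(1) by (simp add: mult.assoc del: cis_multiple_2pi)
  also have "\<dots> = 1" by (rule cis_multiple_2pi) simp
  finally show ?thesis using k by (simp add: omega_add)
qed

lemma Fk_omega: "Fk (\<lambda>x. omega p (P x)) X k x x' = omega p (\<Sum>T\<in>Pow {..<k}. (-1)^card T * P (mix (XU X T) x x'))"
  unfolding Fk_def cj_omega omega_sum ..

lemma alt_zero:
  fixes h :: "nat set \<Rightarrow> int"
  assumes "i < d" and "\<And>T. T \<subseteq> {..<d} \<Longrightarrow> i \<notin> T \<Longrightarrow> h (insert i T) = h T"
  shows "(\<Sum>T\<in>Pow {..<d}. (-1)^card T * h T) = 0"
proof -
  define B where "B = {..<d} - {i}"
  have D: "{..<d} = insert i B" using assms(1) by (auto simp: B_def)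
  have iB: "i \<notin> B" by (simp add: B_def)
  have inj: "inj_on (insert i) (Pow B)"
    by (rule inj_onI) (metis Pow_iff iB insert_ident subsetD)
  have disj: "Pow B \<inter> insert i ` Pow B = {}" using iB by auto
  have "(\<Sum>T\<in>Pow {..<d}. (-1)^card T * h T)
      = (\<Sum>T\<in>Pow B. (-1)^card T * h T) + (\<Sum>T\<in>insert i ` Pow B. (-1)^card T * h T)"
    unfolding D Pow_insert by (rule sum.union_disjoint) (auto simp: B_def disj)
  also have "(\<Sum>T\<in>insert i ` Pow B. (-1)^card T * h T) = (\<Sum>T\<in>Pow B. (-1)^card (insert i T) * h (insert i T))"
    by (subst sum.reindex[OF inj]) simp
  also have "\<dots> = (\<Sum>T\<in>Pow B. - ((-1)^card T * h T))"
  proof (intro sum.cong refl)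
    fix T assume T: "T \<in> Pow B"
    then have "finite T" "i \<notin> T" "T \<subseteq> {..<d}" using iB finite_subset[of T B] by (auto simp: B_def)
    then show "(-1)^card (insert i T) * h (insert i T) = - ((-1)^card T * h T)"
      using assms(2) by simp
  qed
  finally show ?thesis by (simp add: sum_negf)
qed

definition mon :: "nat \<Rightarrow> (nat \<Rightarrow> nat) \<Rightarrow> (nat \<Rightarrow> int) \<Rightarrow> int" where
  "mon n s z = (\<Prod>u<n. z u ^ s u)"

lemma mono_struct:
  fixes s :: "nat \<Rightarrow> nat"
  assumes deg: "(\<Sum>u<n. s u) \<le> d"
    and part: "is_partition n d X"
    and meets: "\<forall>i<d. \<exists>u\<in>X i. s u \<ge> 1"
  obtains u where "\<And>i. i < d \<Longrightarrow> u i \<in> X i" "inj_on u {..<d}" "u ` {..<d} \<subseteq> {..<n}"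
    "\<And>z. mon n s z = (\<Prod>i<d. z (u i))"
proof -
  have "\<forall>i. \<exists>v. i < d \<longrightarrow> v \<in> X i \<and> 1 \<le> s v" using meets by metis
  then obtain u where u: "\<And>i. i < d \<Longrightarrow> u i \<in> X i \<and> 1 \<le> s (u i)" by metis
  have disj: "\<And>i j. i < d \<Longrightarrow> j < d \<Longrightarrow> i \<noteq> j \<Longrightarrow> X i \<inter> X j = {}"
    and un: "(\<Union>i<d. X i) = {..<n}" using part by (auto simp: is_partition_def)
  have inj: "inj_on u {..<d}"
  proof (rule inj_onI)
    fix i j assume "i \<in> {..<d}" "j \<in> {..<d}" "u i = u j"
    then show "i = j" using u[of i] u[of j] disj[of i j] by auto
  qed
  have sub: "u ` {..<d} \<subseteq> {..<n}" using u un by blast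
  define U where "U = u ` {..<d}"
  have finU: "finite U" by (simp add: U_def)
  have split: "(\<Sum>j<n. s j) = (\<Sum>j\<in>U. s j) + (\<Sum>j\<in>{..<n} - U. s j)"
    using sub unfolding U_def by (subst sum.subset_diff[of _ "{..<n}"]) auto
  have SU: "(\<Sum>j\<in>U. s j) = (\<Sum>i<d. s (u i))"
    unfolding U_def by (subst sum.reindex[OF inj]) simp
  have ge: "d \<le> (\<Sum>i<d. s (u i))"
  proof -
    have "(\<Sum>i<d. (1::nat)) \<le> (\<Sum>i<d. s (u i))" using u by (intro sum_mono) auto
    then show ?thesis by simp
  qed
  have ones: "s (u i) = 1" if "i < d" for i
  proof (rule ccontr)
    assume "s (u i) \<noteq> 1"
    then have "1 < s (u i)" using u[OF that] by simp
    then have "(\<Sum>i<d. (1::nat)) < (\<Sum>i<d. s (u i))"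
      using u that by (intro sum_strict_mono_ex1) auto
    then show False using deg split SU by simp
  qed
  have rest: "(\<Sum>j\<in>{..<n} - U. s j) = 0" using deg split SU ge by linarith
  then have zero: "s j = 0" if "j \<in> {..<n} - U" for j
    using that by (simp add: sum_eq_0_iff)
  have "mon n s z = (\<Prod>i<d. z (u i))" for z
  proof -
    have "mon n s z = (\<Prod>j\<in>U. z j ^ s j) * (\<Prod>j\<in>{..<n} - U. z j ^ s j)"
      unfolding mon_def using sub unfolding U_def by (subst prod.subset_diff[of _ "{..<n}"]) auto
    also have "(\<Prod>j\<in>{..<n} - U. z j ^ s j) = 1" using zero by (intro prod.neutral) auto
    also have "(\<Prod>j\<in>U. z j ^ s j) = (\<Prod>i<d. z (u i) ^ s (u i))"
      unfolding U_def by (subst prod.reindex[OF inj]) simp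
    also have "\<dots> = (\<Prod>i<d. z (u i))" using ones by (intro prod.cong) auto
    finally show ?thesis by simp
  qed
  then show ?thesis using that u inj sub by blast
qed

lemma poly_eval_mon: "poly_eval n M c z = (\<Sum>s\<in>M. c s * mon n s z)"
  unfolding poly_eval_def mon_def ..

lemma alt_cong:
  assumes p0: "p > 0" and deg: "is_poly_deg_le p n M c d" and part: "is_partition n d X"
  shows "(\<Sum>T\<in>Pow {..<d}. (-1)^card T * poly_eval n M c (mix (XU X T) x x')) mod int p
       = poly_eval n (restrict_mons p M c d X) c (sub p n x x') mod int p"
proof -
  define alt where "alt s = (\<Sum>T\<in>Pow {..<d}. (-1)^card T * mon n s (mix (XU X T) x x'))" for s
  define Q where "Q s = (c s mod int p \<noteq> 0 \<and> (\<forall>i<d. \<exists>u\<in>X i. s u \<ge> 1))" for s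
  define y where "y = sub p n x x'"
  have finM: "finite M" using deg by (simp add: is_poly_deg_le_def)
  have disj: "\<And>i j. i < d \<Longrightarrow> j < d \<Longrightarrow> i \<noteq> j \<Longrightarrow> X i \<inter> X j = {}"
    using part by (auto simp: is_partition_def)
  have L: "(\<Sum>T\<in>Pow {..<d}. (-1)^card T * poly_eval n M c (mix (XU X T) x x')) = (\<Sum>s\<in>M. c s * alt s)"
    unfolding poly_eval_mon alt_def by (simp add: sum_distrib_left mult_ac sum.swap[of _ "Pow {..<d}" M])
  have R: "poly_eval n (restrict_mons p M c d X) c y = (\<Sum>s\<in>M. if Q s then c s * mon n s y else 0)"
    unfolding poly_eval_mon restrict_mons_def Q_def by (rule sum.inter_filter[OF finM])
  have termdvd: "int p dvd c s * alt s - (if Q s then c s * mon n s y else 0)" if sM: "s \<in> M" for s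
  proof (cases "Q s")
    case True
    then have meets: "\<forall>i<d. \<exists>u\<in>X i. s u \<ge> 1" and cs: "c s mod int p \<noteq> 0" by (auto simp: Q_def)
    have dg: "(\<Sum>u<n. s u) \<le> d" using deg sM cs by (auto simp: is_poly_deg_le_def)
    obtain u where uX: "\<And>i. i < d \<Longrightarrow> u i \<in> X i" and inj: "inj_on u {..<d}"
      and usub: "u ` {..<d} \<subseteq> {..<n}" and monu: "\<And>z. mon n s z = (\<Prod>i<d. z (u i))"
      using mono_struct[OF dg part meets] by blast
    have mixu: "mix (XU X T) x x' (u i) = (if i \<in> T then x' (u i) else x (u i))"
      if "T \<subseteq> {..<d}" "i < d" for T i
    proof -
      have "u i \<in> XU X T \<longleftrightarrow> i \<in> T"
        using that uX disj unfolding XU_def by blast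
      then show ?thesis unfolding mix_def by simp
    qed
    have "alt s = (\<Sum>T\<in>Pow {..<d}. (-1)^card T * ((\<Prod>i\<in>T. x' (u i)) * (\<Prod>i\<in>{..<d} - T. x (u i))))"
      unfolding alt_def monu
    proof (intro sum.cong refl arg_cong[where f="\<lambda>t. _ * t"])
      fix T assume T: "T \<in> Pow {..<d}"
      have "(\<Prod>i<d. mix (XU X T) x x' (u i)) = (\<Prod>i<d. if i \<in> T then x' (u i) else x (u i))"
        using T mixu by (intro prod.cong) auto
      also have "\<dots> = (\<Prod>i\<in>T. x' (u i)) * (\<Prod>i\<in>{..<d} - T. x (u i))"
        using T by (subst prod.If_cases) (auto intro!: prod.cong simp: Int_absorb1 Diff_eq)
      finally show "(\<Prod>i<d. mix (XU X T) x x' (u i)) = (\<Prod>i\<in>T. x' (u i)) * (\<Prod>i\<in>{..<d} - T. x (u i))" .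
    qed
    also have "\<dots> = (\<Prod>i<d. x (u i) - x' (u i))"
      by (subst prod_diff_conv_sum) (auto simp: mult.assoc)
    finally have altq: "alt s = (\<Prod>i<d. x (u i) - x' (u i))" .
    have mony: "mon n s y = (\<Prod>i<d. (x (u i) - x' (u i)) mod int p)"
      unfolding monu y_def sub_def using usub by (intro prod.cong) auto
    have "alt s mod int p = mon n s y mod int p"
      unfolding altq mony by (simp add: mod_prod_eq)
    then have "int p dvd alt s - mon n s y" by (simp add: mod_eq_dvd_iff)
    then have "int p dvd c s * (alt s - mon n s y)" by simp
    then show ?thesis using True by (simp add: right_diff_distrib)
  next
    case False
    show ?thesis
    proof (cases "c s mod int p = 0")
      case True
      then show ?thesis using False by (simp add: mod_eq_0_iff_dvd)
    next
      case cs: False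
      then obtain i where i: "i < d" "\<forall>v\<in>X i. s v = 0" using False by (auto simp: Q_def not_le)
      have "alt s = 0" unfolding alt_def
      proof (rule alt_zero[OF i(1)])
        fix T assume "T \<subseteq> {..<d}" "i \<notin> T"
        show "mon n s (mix (XU X (insert i T)) x x') = mon n s (mix (XU X T) x x')"
          unfolding mon_def
        proof (intro prod.cong refl)
          fix v
          show "mix (XU X (insert i T)) x x' v ^ s v = mix (XU X T) x x' v ^ s v"
            using i(2) by (cases "s v = 0") (auto simp: mix_def XU_def)
        qed
      qed
      then show ?thesis using False by simp
    qed
  qed
  have "int p dvd (\<Sum>s\<in>M. c s * alt s - (if Q s then c s * mon n s y else 0))"
    by (rule dvd_sum) (rule termdvd)
  then have "int p dvd (\<Sum>s\<in>M. c s * alt s) - poly_eval n (restrict_mons p M c d X) c y"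
    unfolding R by (simp add: sum_subtractf)
  then show ?thesis unfolding L y_def by (simp add: mod_eq_dvd_iff)
qed

theorem proposition3p7:
  fixes p n d :: nat and D :: "int \<Rightarrow> real"
    and M :: "(nat \<Rightarrow> nat) set" and c :: "(nat \<Rightarrow> nat) \<Rightarrow> int"
    and X :: "nat \<Rightarrow> nat set"
  assumes "prime p" and "p \<ge> 3" and "d \<ge> 2"
    and "is_distr p D"
    and "is_poly_deg_le p n M c d"
    and "is_partition n d X"
  shows "complex_of_real (cmod (expect_prod p n D (\<lambda>x. omega p (poly_eval n M c x))) ^ (2 ^ d))
     \<le> expect_prod p n (diff_distr p D)
          (\<lambda>x. omega p (poly_eval n (restrict_mons p M c d X) c x))"
proof -
  define f where "f x = omega p (poly_eval n M c x)" for x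
  have p0: "p > 0" using assms(2) by simp
  have disj: "\<And>i j. i < d \<Longrightarrow> j < d \<Longrightarrow> i \<noteq> j \<Longrightarrow> X i \<inter> X j = {}"
    using assms(6) by (auto simp: is_partition_def)
  have B: "(cmod (expect_prod p n D f))^(2^d) \<le> cmod (Bk p n D f X d)"
     "Bk p n D f X d = complex_of_real (cmod (Bk p n D f X d))"
    using box[OF assms(4) disj, where k=d and f=f and n=n] assms(3) by auto
  have "Bk p n D f X d = (\<Sum>x\<in>Fp_vecs p n. complex_of_real (wt D n x) *
       (\<Sum>x'\<in>Fp_vecs p n. complex_of_real (wt D n x') * omega p (poly_eval n (restrict_mons p M c d X) c (sub p n x x'))))"
    unfolding Bk_def f_def Fk_omega
    using omega_mod[OF p0 alt_cong[OF p0 assms(5) assms(6)]] by simp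
  also have "\<dots> = expect_prod p n (diff_distr p D) (\<lambda>x. omega p (poly_eval n (restrict_mons p M c d X) c x))"
    by (rule pushforward[OF p0])
  finally have E: "Bk p n D f X d = \<dots>" .
  have "complex_of_real (cmod (expect_prod p n D f) ^ (2 ^ d)) \<le> complex_of_real (cmod (Bk p n D f X d))"
    using B(1) by (simp add: less_eq_complex_def)
  then have "complex_of_real (cmod (expect_prod p n D f) ^ (2 ^ d)) \<le> Bk p n D f X d"
    using B(2) by simp
  then show ?thesis
    unfolding E f_def .
qed

end
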